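(* Let $A=(a_{ij})$ be column-stochastic and compatible with the strongly connected digraph $\mathcal G$ with parameter $\bar m$, let $(i^k,\mathbf d^k)$ satisfy the asynchrony model with constants $T,D$, and let $\widehat{\mathbf A}^k=\mathbf S^k\mathbf C^k\in\mathbb R^{S\times S}$ be the augmented matrices defined in the context. Then for all $k\in\mathbb N_0$: (a) $\widehat{\mathbf A}^k$ is column-stochastic; (b) every entry in the rows indexed by $\mathcal V$ (the computing agents) of $\widehat{\mathbf A}^{k+K_1-1:k}$ is at least $\eta=\bar m^{K_1}$, where $K_1=(2I-1)T+ID$.
   Context: $\mathcal G=(\mathcal V,\mathcal E)$, $\mathcal V=\{1,\dots,I\}$, strongly connected digraph without self-loops; $(j,i)\in\mathcal E$ means $j$ sends to $i$; $\mathcal N_i^{\rm in}=\{j:(j,i)\in\mathcal E\}$, $\mathcal N_i^{\rm out}=\{j:(i,j)\in\mathcal E\}$. Compatibility with parameter $\bar m\in(0,1)$: $a_{ii}\ge\bar m$, $a_{ij}\ge\bar m$ for $(j,i)\in\mathcal E$, $a_{ij}=0$ otherwise. Asynchrony model: $(i^k,\mathbf d^k)$, $i^k\in\mathcal V$, $\mathbf d^k=(d_j^k)_{j\in\mathcal N^{\rm in}_{i^k}}$, every agent appears among $i^k,\dots,i^{k+T-1}$ for all $k$, $0\le d_j^k\le D$. Counters: $\tau_{ij}^{-1}=-D$ for $(j,i)\in\mathcal E$; $\tau_{i^kj}^k=\max(\tau_{i^kj}^{k-1},k-d_j^k)$ for $j\in\mathcal N^{\rm in}_{i^k}$, and $\tau_{ij}^k=\tau_{ij}^{k-1}$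 for $i\ne i^k$. Augmented index set $\widehat{\mathcal V}=\mathcal V\cup\{(j,i)^d:(j,i)\in\mathcal E,\ d=0,\dots,D\}$ (virtual nodes), $S=|\widehat{\mathcal V}|=I+(D+1)|\mathcal E|$. Let $R^k=\{(j,i^k)^d: j\in\mathcal N^{\rm in}_{i^k},\ k-\tau^k_{i^kj}\le d\le D\}$. Sum matrix $\mathbf C^k$: $C^k_{hm}=1$ if $h=i^k$ and $m\in R^k$; $C^k_{hm}=1$ if $h=m\in\widehat{\mathcal V}\setminus R^k$; $0$ otherwise. Push matrix $\mathbf S^k$: $S^k_{(i^k,j)^0,\,i^k}=a_{ji^k}$ for $j\in\mathcal N^{\rm out}_{i^k}$; $S^k_{i^ki^k}=a_{i^ki^k}$; $S^k_{hh}=1$ for $h\in\mathcal V\setminus\{i^k\}$; $S^k_{(i,j)^{d+1},(i,j)^d}=1$ for $(i,j)\in\mathcal E$, $0\le d\le D-1$; $S^k_{(i,j)^D,(i,j)^D}=1$ for $(i,j)\in\mathcal E$; all other entries $0$. $\widehat{\mathbf A}^{k:t}=\widehat{\mathbf A}^k\cdots\widehat{\mathbf A}^t$ ($=\widehat{\mathbf A}^t$ if $k=t$). *)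

theory Defs
  imports Complex_Main
begin

text \<open>Agents are 0..<I. Augmented nodes: Ag i is agent i; Vt j i d is the virtual node (j,i)^d.\<close>

datatype node = Ag nat | Vt nat nat nat

definition agents :: "nat \<Rightarrow> nat set" where
  "agents I = {0..<I}"

definition N_in :: "(nat \<times> nat) set \<Rightarrow> nat \<Rightarrow> nat set" where
  "N_in E i = {j. (j, i) \<in> E}"

definition N_out :: "(nat \<times> nat) set \<Rightarrow> nat \<Rightarrow> nat set" where
  "N_out E i = {j. (i, j) \<in> E}"

definition strongly_connected_digraph :: "nat \<Rightarrow> (nat \<times> nat) set \<Rightarrow> bool" where
  "strongly_connected_digraph I E \<longleftrightarrow>
     E \<subseteq> agents I \<times> agents I \<and> (\<forall>(i,j)\<in>E. i \<noteq> j) \<and>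
     (\<forall>i\<in>agents I. \<forall>j\<in>agents I. (i, j) \<in> E\<^sup>*)"

definition col_stochastic :: "'a set \<Rightarrow> ('a \<Rightarrow> 'a \<Rightarrow> real) \<Rightarrow> bool" where
  "col_stochastic X M \<longleftrightarrow>
     (\<forall>h\<in>X. \<forall>m\<in>X. M h m \<ge> 0) \<and> (\<forall>m\<in>X. (\<Sum>h\<in>X. M h m) = 1)"

definition compatible :: "nat \<Rightarrow> (nat \<times> nat) set \<Rightarrow> real \<Rightarrow> (nat \<Rightarrow> nat \<Rightarrow> real) \<Rightarrow> bool" where
  "compatible I E mbar a \<longleftrightarrow>
     (\<forall>i\<in>agents I. a i i \<ge> mbar) \<and>
     (\<forall>i\<in>agents I. \<forall>j\<in>agents I. (j, i) \<in> E \<longrightarrow> a i j \<ge> mbar) \<and>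
     (\<forall>i\<in>agents I. \<forall>j\<in>agents I. i \<noteq> j \<and> (j, i) \<notin> E \<longrightarrow> a i j = 0)"

text \<open>Asynchrony model: ik k is the active agent at iteration k, dl k j the delay d_j^k.\<close>
definition async_model :: "nat \<Rightarrow> (nat \<times> nat) set \<Rightarrow> (nat \<Rightarrow> nat) \<Rightarrow> (nat \<Rightarrow> nat \<Rightarrow> nat)
     \<Rightarrow> nat \<Rightarrow> nat \<Rightarrow> bool" where
  "async_model I E ik dl T D \<longleftrightarrow>
     (\<forall>k. ik k \<in> agents I) \<and>
     (\<forall>k. \<forall>i\<in>agents I. \<exists>t\<in>{k..<k+T}. ik t = i) \<and>
     (\<forall>k. \<forall>j\<in>N_in E (ik k). dl k j \<le> D)"

text \<open>Counters: tauS 0 i j = tau^{-1}_{ij}, tauS (Suc k) i j = tau^k_{ij}.\<close>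
fun tauS :: "(nat \<times> nat) set \<Rightarrow> (nat \<Rightarrow> nat) \<Rightarrow> (nat \<Rightarrow> nat \<Rightarrow> nat) \<Rightarrow> nat
     \<Rightarrow> nat \<Rightarrow> nat \<Rightarrow> nat \<Rightarrow> int" where
  "tauS E ik dl D 0 i j = - int D"
| "tauS E ik dl D (Suc k) i j =
     (if i = ik k \<and> j \<in> N_in E (ik k)
      then max (tauS E ik dl D k i j) (int k - int (dl k j))
      else tauS E ik dl D k i j)"

definition tau :: "(nat \<times> nat) set \<Rightarrow> (nat \<Rightarrow> nat) \<Rightarrow> (nat \<Rightarrow> nat \<Rightarrow> nat) \<Rightarrow> nat
     \<Rightarrow> nat \<Rightarrow> nat \<Rightarrow> nat \<Rightarrow> int" where
  "tau E ik dl D k i j = tauS E ik dl D (Suc k) i j"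

definition aug_nodes :: "nat \<Rightarrow> (nat \<times> nat) set \<Rightarrow> nat \<Rightarrow> node set" where
  "aug_nodes I E D = Ag ` agents I \<union> {Vt j i d | j i d. (j, i) \<in> E \<and> d \<le> D}"

definition Rset :: "(nat \<times> nat) set \<Rightarrow> (nat \<Rightarrow> nat) \<Rightarrow> (nat \<Rightarrow> nat \<Rightarrow> nat) \<Rightarrow> nat \<Rightarrow> nat
     \<Rightarrow> node set" where
  "Rset E ik dl D k = {Vt j (ik k) d | j d. j \<in> N_in E (ik k) \<and>
       int k - tau E ik dl D k (ik k) j \<le> int d \<and> d \<le> D}"

definition Cmat :: "nat \<Rightarrow> (nat \<times> nat) set \<Rightarrow> (nat \<Rightarrow> nat) \<Rightarrow> (nat \<Rightarrow> nat \<Rightarrow> nat) \<Rightarrow> nat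
     \<Rightarrow> nat \<Rightarrow> node \<Rightarrow> node \<Rightarrow> real" where
  "Cmat I E ik dl D k h m =
     (if h = Ag (ik k) \<and> m \<in> Rset E ik dl D k then 1
      else if h = m \<and> m \<in> aug_nodes I E D - Rset E ik dl D k then 1
      else 0)"

definition Smat :: "nat \<Rightarrow> (nat \<times> nat) set \<Rightarrow> (nat \<Rightarrow> nat \<Rightarrow> real) \<Rightarrow> (nat \<Rightarrow> nat) \<Rightarrow> nat
     \<Rightarrow> nat \<Rightarrow> node \<Rightarrow> node \<Rightarrow> real" where
  "Smat I E a ik D k h m =
     (case (h, m) of
        (Vt i j d, Ag l) \<Rightarrow>
           (if l = ik k \<and> i = ik k \<and> j \<in> N_out E (ik k) \<and> d = 0 then a j (ik k) else 0)
      | (Ag l, Ag l') \<Rightarrow>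
           (if l = l' \<and> l = ik k then a l l
            else if l = l' \<and> l \<in> agents I then 1 else 0)
      | (Vt i j d, Vt i' j' d') \<Rightarrow>
           (if i = i' \<and> j = j' \<and> (i, j) \<in> E \<and>
               ((d = Suc d' \<and> d' < D) \<or> (d = D \<and> d' = D)) then 1 else 0)
      | (Ag l, Vt i j d) \<Rightarrow> 0)"

definition mmult :: "'a set \<Rightarrow> ('a \<Rightarrow> 'a \<Rightarrow> real) \<Rightarrow> ('a \<Rightarrow> 'a \<Rightarrow> real) \<Rightarrow> 'a \<Rightarrow> 'a \<Rightarrow> real" where
  "mmult X M N h m = (\<Sum>l\<in>X. M h l * N l m)"

definition Ahat :: "nat \<Rightarrow> (nat \<times> nat) set \<Rightarrow> (nat \<Rightarrow> nat \<Rightarrow> real) \<Rightarrow> (nat \<Rightarrow> nat)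
     \<Rightarrow> (nat \<Rightarrow> nat \<Rightarrow> nat) \<Rightarrow> nat \<Rightarrow> nat \<Rightarrow> node \<Rightarrow> node \<Rightarrow> real" where
  "Ahat I E a ik dl D k = mmult (aug_nodes I E D) (Smat I E a ik D k) (Cmat I E ik dl D k)"

text \<open>Aprod ... t n = Ahat^{t+n:t} = Ahat^{t+n} * ... * Ahat^t.\<close>
fun Aprod :: "nat \<Rightarrow> (nat \<times> nat) set \<Rightarrow> (nat \<Rightarrow> nat \<Rightarrow> real) \<Rightarrow> (nat \<Rightarrow> nat)
     \<Rightarrow> (nat \<Rightarrow> nat \<Rightarrow> nat) \<Rightarrow> nat \<Rightarrow> nat \<Rightarrow> nat \<Rightarrow> node \<Rightarrow> node \<Rightarrow> real" where
  "Aprod I E a ik dl D t 0 = Ahat I E a ik dl D t"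
| "Aprod I E a ik dl D t (Suc n) =
     mmult (aug_nodes I E D) (Ahat I E a ik dl D (t + Suc n)) (Aprod I E a ik dl D t n)"

end

theory Submission imports Defs begin


lemma t1: "Smat I E a ik D k (Ag l) (Vt i j d) = 0" by (simp add: Smat_def)
lemma t2: "Smat I E a ik D k (Vt i' j' d') (Vt i j d) = (if i' = i \<and> j'=j \<and> (i',j')\<in>E \<and> ((d' = Suc d \<and> d<D) \<or> (d'=D \<and> d=D)) then 1 else 0)"
  by (simp add: Smat_def)
lemma t3: "Smat I E a ik D k (Ag l') (Ag l) = (if l'=l \<and> l = ik k then a l l else if l'=l \<and> l\<in>agents I then 1 else 0)"
  by (simp add: Smat_def, blast)
lemma t4: "Smat I E a ik D k (Vt i j d) (Ag l) = (if l = ik k \<and> i = ik k \<and> j \<in> N_out E (ik k) \<and> d=0 then a j (ik k) else 0)"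
  by (simp add: Smat_def)

inductive pth :: "node set \<Rightarrow> (nat \<Rightarrow> node \<Rightarrow> node \<Rightarrow> real) \<Rightarrow> real \<Rightarrow> nat \<Rightarrow> node \<Rightarrow> nat \<Rightarrow> node \<Rightarrow> bool"
  for Xs Ah mb t y where
  p0: "y \<in> Xs \<Longrightarrow> pth Xs Ah mb t y 0 y"
| pS: "pth Xs Ah mb t y n l \<Longrightarrow> x \<in> Xs \<Longrightarrow> mb \<le> Ah (t+n) x l \<Longrightarrow> pth Xs Ah mb t y (Suc n) x"

lemma pth_X: "pth Xs Ah mb t y n x \<Longrightarrow> x \<in> Xs"
  by (induction rule: pth.induct) auto

locale L =
  fixes I T D :: nat and E :: "(nat \<times> nat) set" and mbar :: real
    and a :: "nat \<Rightarrow> nat \<Rightarrow> real" and ik :: "nat \<Rightarrow> nat" and dl :: "nat \<Rightarrow> nat \<Rightarrow> nat"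
  assumes sc: "strongly_connected_digraph I E"
    and mpos: "0 < mbar" and m1: "mbar < 1"
    and cs: "col_stochastic (agents I) a"
    and cp: "compatible I E mbar a"
    and am: "async_model I E ik dl T D"
begin

abbreviation "X \<equiv> aug_nodes I E D"
abbreviation "S k \<equiv> Smat I E a ik D k"
abbreviation "C k \<equiv> Cmat I E ik dl D k"
abbreviation "A k \<equiv> Ahat I E a ik dl D k"
abbreviation "R k \<equiv> Rset E ik dl D k"

lemma E_ag: "(x,y) \<in> E \<Longrightarrow> x \<in> agents I \<and> y \<in> agents I"
  using sc unfolding strongly_connected_digraph_def by blast

lemma ik_ag: "ik k \<in> agents I"
  using am unfolding async_model_def by blast

lemma a_nn: "i \<in> agents I \<Longrightarrow> j \<in> agents I \<Longrightarrow> 0 \<le> a i j"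
  using cs unfolding col_stochastic_def by blast

lemma finX: "finite X"
proof -
  have "{Vt j i d | j i d. (j, i) \<in> E \<and> d \<le> D} \<subseteq> (\<lambda>((j,i),d). Vt j i d) ` (E \<times> {..D})"
    by force
  moreover have "finite E" using sc unfolding strongly_connected_digraph_def agents_def
    by (meson finite_SigmaI finite_atLeastLessThan finite_subset)
  ultimately have "finite {Vt j i d | j i d. (j, i) \<in> E \<and> d \<le> D}"
    by (meson finite_SigmaI finite_atMost finite_imageI finite_subset)
  then show ?thesis unfolding aug_nodes_def agents_def by simp
qed


lemma S_nn: "0 \<le> S k h m"
proof (cases h)
  case (Ag l') then show ?thesis
  proof (cases m)
    case (Ag l) then show ?thesis using \<open>h = Ag l'\<close> a_nn ik_ag by (simp add: t3)
  next
    case (Vt i j d) then show ?thesis using \<open>h = Ag l'\<close> by (simp add: t1)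
  qed
next
  case (Vt i' j' d') then show ?thesis
  proof (cases m)
    case (Ag l)
    have "j' \<in> N_out E (ik k) \<Longrightarrow> 0 \<le> a j' (ik k)"
      using a_nn ik_ag E_ag unfolding N_out_def by blast
    then show ?thesis using \<open>h = Vt i' j' d'\<close> Ag by (simp add: t4)
  next
    case (Vt i j d) then show ?thesis using \<open>h = Vt i' j' d'\<close> by (simp add: t2)
  qed
qed

lemma C_nn: "0 \<le> C k h m"
  unfolding Cmat_def by (simp del: Diff_iff)

lemma mmult_nn: "(\<And>h m. 0 \<le> M h m) \<Longrightarrow> (\<And>h m. 0 \<le> N h m) \<Longrightarrow> 0 \<le> mmult X M N h m"
  unfolding mmult_def by (simp add: sum_nonneg)

lemma mmult_ge: "(\<And>h m. 0 \<le> M h m) \<Longrightarrow> (\<And>h m. 0 \<le> N h m) \<Longrightarrow> l \<in> X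
   \<Longrightarrow> M h l * N l m \<le> mmult X M N h m"
  unfolding mmult_def by (rule member_le_sum) (auto simp: finX)

lemma A_nn: "0 \<le> A k h m"
  unfolding Ahat_def by (rule mmult_nn) (auto simp: S_nn C_nn)

lemma A_ge: "l \<in> X \<Longrightarrow> S k h l * C k l m \<le> A k h m"
  unfolding Ahat_def by (rule mmult_ge) (auto simp: S_nn C_nn)

lemma P_nn: "0 \<le> Aprod I E a ik dl D t n h m"
  by (induction n arbitrary: h m) (auto intro!: mmult_nn simp: A_nn)

lemma C_fun: "m \<in> X \<Longrightarrow> C k h m = (if h = (if m \<in> R k then Ag (ik k) else m) then 1 else 0)"
proof (cases "m \<in> R k")
  case True then have "m \<notin> X - R k" by blast
  with True show ?thesis unfolding Cmat_def by (simp del: Diff_iff)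
next
  case False
  assume "m \<in> X" 
  with False have "m \<in> X - R k" by blast
  with False show ?thesis unfolding Cmat_def by (simp del: Diff_iff)
qed


lemma Ag_X: "l \<in> agents I \<Longrightarrow> Ag l \<in> X"
  unfolding aug_nodes_def by blast

lemma Vt_X: "(j,i) \<in> E \<Longrightarrow> d \<le> D \<Longrightarrow> Vt j i d \<in> X"
  unfolding aug_nodes_def by blast

lemma X_cases: "m \<in> X \<Longrightarrow> (\<And>l. m = Ag l \<Longrightarrow> l \<in> agents I \<Longrightarrow> P) \<Longrightarrow>
   (\<And>j i d. m = Vt j i d \<Longrightarrow> (j,i) \<in> E \<Longrightarrow> d \<le> D \<Longrightarrow> P) \<Longrightarrow> P"
  unfolding aug_nodes_def by blast

lemma cs_mult:
  assumes "col_stochastic X M" "col_stochastic X N"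
  shows "col_stochastic X (mmult X M N)"
  unfolding col_stochastic_def
proof (intro conjI ballI)
  fix h m assume "h \<in> X" "m \<in> X"
  then show "0 \<le> mmult X M N h m" using assms unfolding mmult_def col_stochastic_def
    by (auto intro!: sum_nonneg)
next
  fix m assume m: "m \<in> X"
  have "(\<Sum>h\<in>X. mmult X M N h m) = (\<Sum>h\<in>X. \<Sum>l\<in>X. M h l * N l m)" unfolding mmult_def by simp
  also have "\<dots> = (\<Sum>l\<in>X. \<Sum>h\<in>X. M h l * N l m)" by (rule sum.swap)
  also have "\<dots> = (\<Sum>l\<in>X. (\<Sum>h\<in>X. M h l) * N l m)" by (simp add: sum_distrib_right)
  also have "\<dots> = (\<Sum>l\<in>X. N l m)" using assms(1) unfolding col_stochastic_def by simp
  also have "\<dots> = 1" using assms(2) m unfolding col_stochastic_def by simp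
  finally show "(\<Sum>h\<in>X. mmult X M N h m) = 1" .
qed

lemma delta_sum: "t \<in> X \<Longrightarrow> (\<Sum>h\<in>X. (if h = t then 1 else 0::real)) = 1"
  using finX by (simp add: sum.delta')

lemma C_cs: "col_stochastic X (C k)"
  unfolding col_stochastic_def
proof (intro conjI ballI)
  fix h m show "0 \<le> C k h m" by (rule C_nn)
next
  fix m assume m: "m \<in> X"
  have t: "(if m \<in> R k then Ag (ik k) else m) \<in> X" using m Ag_X ik_ag by auto
  show "(\<Sum>h\<in>X. C k h m) = 1" using delta_sum[OF t] by (simp only: C_fun[OF m])
qed


lemma S_Ag_other: "l \<noteq> ik k \<Longrightarrow> l \<in> agents I \<Longrightarrow> S k h (Ag l) = (if h = Ag l then 1 else 0)"
  by (cases h) (simp_all add: t3 t4)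

lemma S_Vt: "(i,j)\<in>E \<Longrightarrow> d \<le> D \<Longrightarrow>
   S k h (Vt i j d) = (if h = Vt i j (if d < D then Suc d else D) then 1 else 0)"
proof (cases h)
  case (Ag l) then show ?thesis by (simp add: t1)
next
  case (Vt i' j' d')
  assume "(i,j)\<in>E" "d \<le> D"
  then have "(i' = i \<and> j'=j \<and> (i',j')\<in>E \<and> ((d' = Suc d \<and> d<D) \<or> (d'=D \<and> d=D))) = (h = Vt i j (if d < D then Suc d else D))"
    using Vt by auto
  then show ?thesis using Vt t2 by presburger
qed

lemma N_out_sub: "N_out E i \<subseteq> agents I - {i}"
  using sc unfolding N_out_def strongly_connected_digraph_def by auto

lemma S_col_act: "(\<Sum>h\<in>X. S k h (Ag (ik k))) = 1"
proof -
  define i where "i = ik k"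
  define V where "V = (\<lambda>j. Vt i j 0) ` N_out E i"
  define f where "f h = S k h (Ag i)" for h
  have fin: "finite (N_out E i)" using N_out_sub finite_subset unfolding agents_def by blast
  have iag: "i \<in> agents I" using ik_ag i_def by simp
  have sub: "insert (Ag i) V \<subseteq> X" using Ag_X[OF iag] Vt_X unfolding V_def N_out_def by auto
  have z: "\<forall>h\<in>X - insert (Ag i) V. f h = 0"
  proof
    fix h assume h: "h \<in> X - insert (Ag i) V"
    show "f h = 0"
    proof (cases h)
      case (Ag l') then show ?thesis using h unfolding f_def by (simp add: t3 i_def)
    next
      case (Vt x y z) then show ?thesis using h unfolding f_def V_def by (auto simp add: t4 i_def)
    qed
  qed
  have "(\<Sum>h\<in>X. f h) = (\<Sum>h\<in>insert (Ag i) V. f h)"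
    by (rule sum.mono_neutral_right[OF finX sub z])
  also have "\<dots> = f (Ag i) + (\<Sum>h\<in>V. f h)"
    by (rule sum.insert) (auto simp: V_def fin)
  also have "(\<Sum>h\<in>V. f h) = (\<Sum>j\<in>N_out E i. f (Vt i j 0))"
    unfolding V_def by (rule sum.reindex_cong[where l="\<lambda>j. Vt i j 0"]) (auto simp: inj_on_def)
  also have "\<dots> = (\<Sum>j\<in>N_out E i. a j i)"
    unfolding f_def by (rule sum.cong) (auto simp: t4 i_def)
  also have "f (Ag i) = a i i" unfolding f_def by (simp add: t3 i_def)
  also have "(\<Sum>j\<in>N_out E i. a j i) = (\<Sum>j\<in>agents I - {i}. a j i)"
  proof (rule sum.mono_neutral_left)
    show "finite (agents I - {i})" unfolding agents_def by simp
    show "N_out E i \<subseteq> agents I - {i}" by (rule N_out_sub)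
    show "\<forall>j\<in>agents I - {i} - N_out E i. a j i = 0"
      using cp iag unfolding compatible_def N_out_def by auto
  qed
  also have "a i i + (\<Sum>j\<in>agents I - {i}. a j i) = (\<Sum>j\<in>agents I. a j i)"
    using iag by (simp add: sum.remove agents_def)
  also have "\<dots> = 1" using cs iag unfolding col_stochastic_def by blast
  finally show ?thesis unfolding f_def i_def .
qed

lemma S_cs: "col_stochastic X (S k)"
  unfolding col_stochastic_def
proof (intro conjI ballI)
  fix h m show "0 \<le> S k h m" by (rule S_nn)
next
  fix m assume m: "m \<in> X"
  then show "(\<Sum>h\<in>X. S k h m) = 1"
  proof (rule X_cases)
    fix l assume ml: "m = Ag l" "l \<in> agents I"
    show ?thesis
    proof (cases "l = ik k")
      case True then show ?thesis using ml S_col_act by simp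
    next
      case False then show ?thesis using ml delta_sum[OF Ag_X[OF ml(2)]] by (simp add: S_Ag_other)
    qed
  next
    fix j i d assume md: "m = Vt j i d" "(j,i) \<in> E" "d \<le> D"
    have "Vt j i (if d < D then Suc d else D) \<in> X" using md Vt_X by auto
    then show ?thesis using delta_sum md by (simp add: S_Vt)
  qed
qed

lemma A_cs: "col_stochastic X (A k)"
  unfolding Ahat_def by (rule cs_mult[OF S_cs C_cs])


lemma pth_Aprod: "pth X A mbar t y (Suc n) x \<Longrightarrow> mbar ^ (Suc n) \<le> Aprod I E a ik dl D t n x y"
proof (induction n arbitrary: x)
  case 0
  then obtain l where "pth X A mbar t y 0 l" "mbar \<le> A t x l"
    by (cases rule: pth.cases) auto
  then show ?case by (cases rule: pth.cases) auto
next
  case (Suc n)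
  from Suc.prems obtain l where l: "pth X A mbar t y (Suc n) l" "mbar \<le> A (t + Suc n) x l"
    by (cases rule: pth.cases) auto
  have lX: "l \<in> X" using pth_X[OF l(1)] .
  have IH: "mbar ^ Suc n \<le> Aprod I E a ik dl D t n l y" using Suc.IH[OF l(1)] .
  have "mbar ^ Suc (Suc n) = mbar * mbar ^ Suc n" by simp
  also have "\<dots> \<le> A (t + Suc n) x l * Aprod I E a ik dl D t n l y"
    using l(2) IH mpos by (intro mult_mono) auto
  also have "\<dots> \<le> Aprod I E a ik dl D t (Suc n) x y"
    unfolding Aprod.simps by (rule mmult_ge[OF A_nn P_nn lX])
  finally show ?case .
qed

lemma Ag_notR: "Ag l \<notin> R u"
  unfolding Rset_def by blast

lemma A_self: "l \<in> agents I \<Longrightarrow> mbar \<le> A u (Ag l) (Ag l)"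
proof -
  assume l: "l \<in> agents I"
  have c: "C u (Ag l) (Ag l) = 1" using C_fun[OF Ag_X[OF l]] Ag_notR by simp
  have "mbar \<le> S u (Ag l) (Ag l)"
    using cp l m1 unfolding compatible_def by (auto simp: t3)
  then show ?thesis using A_ge[where k=u and h="Ag l" and l="Ag l" and m="Ag l", OF Ag_X[OF l]] c by simp
qed

lemma A_push: "(ik u, j) \<in> E \<Longrightarrow> mbar \<le> A u (Vt (ik u) j 0) (Ag (ik u))"
proof -
  assume e: "(ik u, j) \<in> E"
  have c: "C u (Ag (ik u)) (Ag (ik u)) = 1" using C_fun[OF Ag_X[OF ik_ag]] Ag_notR by simp
  have "mbar \<le> a j (ik u)" using cp e E_ag unfolding compatible_def by blast
  then have "mbar \<le> S u (Vt (ik u) j 0) (Ag (ik u))" using e by (simp add: t4 N_out_def)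
  then show ?thesis using A_ge[where k=u and h="Vt (ik u) j 0" and l="Ag (ik u)" and m="Ag (ik u)", OF Ag_X[OF ik_ag]] c by simp
qed

lemma R_X: "v \<in> R u \<Longrightarrow> v \<in> X"
  unfolding Rset_def N_in_def using Vt_X by blast

lemma R_ik: "Vt j i d \<in> R u \<Longrightarrow> i = ik u"
  unfolding Rset_def by blast

lemma A_absorb: "v \<in> R u \<Longrightarrow> mbar \<le> A u (Ag (ik u)) v"
proof -
  assume v: "v \<in> R u"
  have c: "C u (Ag (ik u)) v = 1" using C_fun[OF R_X[OF v]] v by simp
  have "mbar \<le> S u (Ag (ik u)) (Ag (ik u))"
    using cp ik_ag unfolding compatible_def by (auto simp: t3)
  then show ?thesis using A_ge[where k=u and h="Ag (ik u)" and l="Ag (ik u)" and m=v, OF Ag_X[OF ik_ag]] c by simp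
qed

lemma A_shift: "(j,i) \<in> E \<Longrightarrow> d \<le> D \<Longrightarrow> Vt j i d \<notin> R u \<Longrightarrow>
   mbar \<le> A u (Vt j i (if d < D then Suc d else D)) (Vt j i d)"
proof -
  assume e: "(j,i) \<in> E" "d \<le> D" "Vt j i d \<notin> R u"
  have c: "C u (Vt j i d) (Vt j i d) = 1" using C_fun[OF Vt_X[OF e(1,2)]] e(3) by simp
  have "S u (Vt j i (if d < D then Suc d else D)) (Vt j i d) = 1" using e by (simp add: S_Vt)
  then show ?thesis using A_ge[where k=u and h="Vt j i (if d < D then Suc d else D)" and l="Vt j i d" and m="Vt j i d", OF Vt_X[OF e(1,2)]] c m1
    by simp
qed

lemma inR_D: "(j,i) \<in> E \<Longrightarrow> ik u = i \<Longrightarrow> Vt j i D \<in> R u"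
proof -
  assume e: "(j,i) \<in> E" "ik u = i"
  have jn: "j \<in> N_in E (ik u)" using e unfolding N_in_def by simp
  have "dl u j \<le> D" using am jn unfolding async_model_def by blast
  moreover have "tau E ik dl D u (ik u) j = max (tauS E ik dl D u (ik u) j) (int u - int (dl u j))"
    unfolding tau_def using jn by simp
  ultimately have "int u - tau E ik dl D u (ik u) j \<le> int D" by linarith
  then show ?thesis unfolding Rset_def using jn e by blast
qed

lemma wait: "pth X A mbar t y n (Ag l) \<Longrightarrow> l \<in> agents I \<Longrightarrow> pth X A mbar t y (n+e) (Ag l)"
  by (induction e) (auto intro: pth.pS A_self Ag_X)

lemma virt_aux:
  assumes e: "(j,i) \<in> E" and s: "ik s = i"
  shows "\<forall>n d. s - (t+n) = g \<longrightarrow> pth X A mbar t y n (Vt j i d) \<longrightarrow> d \<le> D \<longrightarrow> t+n+(D-d) \<le> s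
     \<longrightarrow> (\<exists>e'\<le>g+1. pth X A mbar t y (n+e') (Ag i))"
proof (induction g)
  case 0
  show ?case
  proof (intro allI impI)
    fix n d assume h: "s - (t+n) = 0" "pth X A mbar t y n (Vt j i d)" "d \<le> D" "t+n+(D-d) \<le> s"
    have eq: "t + n = s" "d = D" using h by auto
    have "Vt j i d \<in> R (t+n)" using inR_D[OF e, of "t+n"] eq s by simp
    then have "pth X A mbar t y (Suc n) (Ag i)"
      using A_absorb[of "Vt j i d" "t+n"] R_ik[of j i d "t+n"] h(2) Ag_X E_ag[OF e]
      by (auto intro!: pth.pS)
    then show "\<exists>e'\<le>0+1. pth X A mbar t y (n+e') (Ag i)" by (intro exI[of _ 1]) simp
  qed
next
  case (Suc g)
  show ?case
  proof (intro allI impI)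
    fix n d assume h: "s - (t+n) = Suc g" "pth X A mbar t y n (Vt j i d)" "d \<le> D" "t+n+(D-d) \<le> s"
    show "\<exists>e'\<le>Suc g+1. pth X A mbar t y (n+e') (Ag i)"
    proof (cases "Vt j i d \<in> R (t+n)")
      case True
      then have "pth X A mbar t y (Suc n) (Ag i)"
        using A_absorb[of "Vt j i d" "t+n"] R_ik[of j i d "t+n"] h(2) Ag_X E_ag[OF e]
        by (auto intro!: pth.pS)
      then show ?thesis by (intro exI[of _ 1]) simp
    next
      case False
      define d' where "d' = (if d < D then Suc d else D)"
      have p: "pth X A mbar t y (Suc n) (Vt j i d')"
        using A_shift[OF e h(3) False] h(2) Vt_X[OF e] unfolding d'_def
        by (auto intro!: pth.pS)
      have "s - (t + Suc n) = g" "d' \<le> D" "t + Suc n + (D - d') \<le> s"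
        using h unfolding d'_def by auto
      then obtain e' where "e' \<le> g+1" "pth X A mbar t y (Suc n + e') (Ag i)"
        using Suc.IH p by blast
      then show ?thesis by (intro exI[of _ "Suc e'"]) auto
    qed
  qed
qed

lemma virt:
  assumes "(j,i) \<in> E" "ik s = i" "pth X A mbar t y n (Vt j i d)" "d \<le> D" "t+n+(D-d) \<le> s"
  shows "\<exists>e'\<le>s - (t+n) + 1. pth X A mbar t y (n+e') (Ag i)"
  using virt_aux[OF assms(1,2), of t "s - (t+n)" y] assms(3-5) by blast

lemma active: "l \<in> agents I \<Longrightarrow> \<exists>s. u \<le> s \<and> s < u + T \<and> ik s = l"
  using am unfolding async_model_def by fastforce

lemma hop:
  assumes p: "pth X A mbar t y n (Ag l)" and e: "(l,j) \<in> E"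
  shows "\<exists>e'\<le>2*T+D. pth X A mbar t y (n+e') (Ag j)"
proof -
  have l: "l \<in> agents I" "j \<in> agents I" using E_ag[OF e] by auto
  obtain s where s: "t+n \<le> s" "s < t+n+T" "ik s = l" using active[OF l(1)] by blast
  have p1: "pth X A mbar t y (n + (s-(t+n))) (Ag l)" by (rule wait[OF p l(1)])
  have p2: "pth X A mbar t y (Suc (n + (s-(t+n)))) (Vt l j 0)"
    using A_push[of s j] s e p1 Vt_X[OF e] by (auto intro!: pth.pS)
  obtain s' where s': "s+1+D \<le> s'" "s' < s+1+D+T" "ik s' = j" using active[OF l(2)] by blast
  obtain e' where e': "e' \<le> s' - (t + Suc (n + (s-(t+n)))) + 1"
     "pth X A mbar t y (Suc (n + (s-(t+n))) + e') (Ag j)"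
    using virt[OF e s'(3) p2] s s' by auto
  show ?thesis
    apply (rule exI[of _ "Suc (s-(t+n)) + e'"])
    using e' s s' by (auto simp: algebra_simps)
qed

lemma chain:
  "(g,h) \<in> E^^p \<Longrightarrow> pth X A mbar t y n (Ag g) \<Longrightarrow> \<exists>e'\<le>p*(2*T+D). pth X A mbar t y (n+e') (Ag h)"
proof (induction p arbitrary: h)
  case 0 then show ?case by (intro exI[of _ 0]) simp
next
  case (Suc p)
  then obtain h' where h': "(g,h') \<in> E^^p" "(h',h) \<in> E" by auto
  obtain e1 where e1: "e1 \<le> p*(2*T+D)" "pth X A mbar t y (n+e1) (Ag h')" using Suc.IH[OF h'(1) Suc.prems(2)] by blast
  obtain e2 where e2: "e2 \<le> 2*T+D" "pth X A mbar t y (n+e1+e2) (Ag h)" using hop[OF e1(2) h'(2)] by blast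
  show ?case apply (rule exI[of _ "e1+e2"]) using e1 e2 by (auto simp: add.assoc)
qed


lemma short_path:
  assumes g: "g \<in> agents I" and h: "h \<in> agents I"
  shows "\<exists>p\<le>I - 1. (g,h) \<in> E^^p"
proof -
  have "(g,h) \<in> E\<^sup>*" using sc g h unfolding strongly_connected_digraph_def by blast
  then obtain p where "(g,h) \<in> E^^p" using rtrancl_power by blast
  define p0 where "p0 = (LEAST p. (g,h) \<in> E^^p)"
  have P0: "(g,h) \<in> E^^p0" unfolding p0_def by (rule LeastI) fact
  have minp: "\<And>q. q < p0 \<Longrightarrow> (g,h) \<notin> E^^q" unfolding p0_def using not_less_Least by blast
  show ?thesis
  proof (rule ccontr)
    assume "\<not> ?thesis"
    then have "\<not> p0 \<le> I - 1" using P0 by blast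
    then have big: "I \<le> p0" by arith
    from P0 obtain f where f: "f 0 = g" "f p0 = h" "\<forall>i<p0. (f i, f (Suc i)) \<in> E"
      using relpow_fun_conv by metis
    have img: "f ` {0..p0} \<subseteq> agents I"
    proof
      fix x assume "x \<in> f ` {0..p0}"
      then obtain k where k: "k \<le> p0" "x = f k" by auto
      show "x \<in> agents I"
      proof (cases k)
        case 0 then show ?thesis using k f g by simp
      next
        case (Suc k') then show ?thesis using k f E_ag by (metis Suc_le_lessD)
      qed
    qed
    have "\<not> inj_on f {0..p0}"
    proof
      assume "inj_on f {0..p0}"
      then have "card (f ` {0..p0}) = Suc p0" by (simp add: card_image)
      moreover have "card (f ` {0..p0}) \<le> I"
        using card_mono[OF _ img] unfolding agents_def by simp
      ultimately show False using big by simp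
    qed
    then obtain i j where ij: "i < j" "j \<le> p0" "f i = f j"
      unfolding inj_on_def by (metis atLeastAtMost_iff linorder_neqE_nat)
    define q where "q = p0 - (j - i)"
    define f' where "f' k = (if k \<le> i then f k else f (k + (j - i)))" for k
    have "(g,h) \<in> E^^q"
      unfolding relpow_fun_conv
    proof (intro exI[of _ f'] conjI allI impI)
      show "f' 0 = g" unfolding f'_def using f by simp
      show "f' q = h"
      proof (cases "q \<le> i")
        case True then have "j = p0" "q = i" using ij unfolding q_def by auto
        then show ?thesis unfolding f'_def using f ij by simp
      next
        case False then show ?thesis unfolding f'_def q_def using f ij by simp
      qed
      fix k assume k: "k < q"
      show "(f' k, f' (Suc k)) \<in> E"
      proof (cases "k < i")
        case True then show ?thesis unfolding f'_def using f ij k unfolding q_def by auto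
      next
        case False
        then have "f' k = f (k + (j - i))" unfolding f'_def using ij by (auto simp: f'_def)
        moreover have "f' (Suc k) = f (Suc (k + (j - i)))" unfolding f'_def using False by auto
        moreover have "k + (j - i) < p0" using k ij unfolding q_def by auto
        ultimately show ?thesis using f by simp
      qed
    qed
    moreover have "q < p0" using ij unfolding q_def by auto
    ultimately show False using minp by blast
  qed
qed

end

theorem lemma3:
  fixes I T D :: nat and E :: "(nat \<times> nat) set" and mbar :: real
    and a :: "nat \<Rightarrow> nat \<Rightarrow> real" and ik :: "nat \<Rightarrow> nat" and dl :: "nat \<Rightarrow> nat \<Rightarrow> nat"
  assumes "strongly_connected_digraph I E"
    and "0 < mbar" and "mbar < 1"
    and "col_stochastic (agents I) a"
    and "compatible I E mbar a"
    and "async_model I E ik dl T D"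
  shows "\<forall>k::nat.
           col_stochastic (aug_nodes I E D) (Ahat I E a ik dl D k) \<and>
           (let K1 = (2 * I - 1) * T + I * D in
            \<forall>h\<in>agents I. \<forall>m\<in>aug_nodes I E D.
              Aprod I E a ik dl D k (K1 - 1) (Ag h) m \<ge> mbar ^ K1)"
proof -
  interpret L I T D E mbar a ik dl using assms by unfold_locales
  show ?thesis
  proof (intro allI conjI)
    fix k
    show "col_stochastic X (A k)" by (rule A_cs)
    define K1 where "K1 = (2 * I - 1) * T + I * D"
    have I1: "I \<ge> 1" using ik_ag[of 0] unfolding agents_def by simp
    obtain I' where I': "I = Suc I'" using I1 by (cases I) auto
    have T1: "T \<ge> 1" using active[OF ik_ag[of 0], of 0] by auto
    have K1eq: "K1 = D + T + (I - 1) * (2*T + D)" unfolding K1_def I' by (simp add: algebra_simps)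
    have "\<forall>h\<in>agents I. \<forall>m\<in>X. mbar ^ K1 \<le> Aprod I E a ik dl D k (K1 - 1) (Ag h) m"
    proof (intro ballI)
      fix h m assume h: "h \<in> agents I" and m: "m \<in> X"
      have "\<exists>g e0. g \<in> agents I \<and> e0 \<le> D + T \<and> pth X A mbar k m e0 (Ag g)"
        using m
      proof (rule X_cases)
        fix l assume "m = Ag l" "l \<in> agents I"
        then show ?thesis using pth.p0[of m X] m by (intro exI[of _ l] exI[of _ 0]) auto
      next
        fix j i d assume md: "m = Vt j i d" "(j,i) \<in> E" "d \<le> D"
        obtain s where s: "k + D \<le> s" "s < k + D + T" "ik s = i" using active E_ag[OF md(2)] by blast
        have P: "pth X A mbar k m 0 (Vt j i d)" using pth.p0[of m X] m md by simp
        have c: "k+0+(D-d) \<le> s" using s(1) by simp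
        obtain e' where "e' \<le> s - (k+0) + 1" "pth X A mbar k m (0+e') (Ag i)"
          using virt[OF md(2) s(3) P md(3) c] by blast
        then show ?thesis using E_ag[OF md(2)] s by (intro exI[of _ i] exI[of _ e']) auto
      qed
      then obtain g e0 where g: "g \<in> agents I" "e0 \<le> D + T" "pth X A mbar k m e0 (Ag g)" by blast
      obtain p where p: "p \<le> I - 1" "(g,h) \<in> E^^p" using short_path[OF g(1) h] by blast
      obtain e1 where e1: "e1 \<le> p*(2*T+D)" "pth X A mbar k m (e0+e1) (Ag h)" using chain[OF p(2) g(3)] by blast
      have "p*(2*T+D) \<le> (I-1)*(2*T+D)" using p(1) by simp
      then have le: "e0 + e1 \<le> K1" using e1(1) g(2) K1eq by linarith
      have "pth X A mbar k m (e0 + e1 + (K1 - (e0+e1))) (Ag h)" by (rule wait[OF e1(2) h])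
      then have "pth X A mbar k m (Suc (K1 - 1)) (Ag h)" using le K1eq T1 by (simp)
      from pth_Aprod[OF this] show "mbar ^ K1 \<le> Aprod I E a ik dl D k (K1 - 1) (Ag h) m"
        using K1eq T1 by simp
    qed
    then show "let K1 = (2 * I - 1) * T + I * D in
            \<forall>h\<in>agents I. \<forall>m\<in>aug_nodes I E D.
              Aprod I E a ik dl D k (K1 - 1) (Ag h) m \<ge> mbar ^ K1" unfolding K1_def Let_def by simp
  qed
qed

end
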